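(* Let $G$ be a graph and let $v$ be a cut vertex of $G$ which decomposes $G$ into $G_1=G(V_1)$ and $H=G(U)$, where $H$ is a cycle. Let $f$ be a divisor on $G$. If $f_{N(H)}$ is bad, then $\rho_G(f)=\rho_{G_1}(f_{G/H}-\epsilon_v)$.
   Context: Graphs are finite, undirected, connected, loopless, possibly with multiple edges; $G(W)$ is the induced subgraph on $W$. A cycle is a connected graph with at least two vertices, all of degree $2$. A vertex $v$ is a cut vertex if removing it disconnects $G$; it decomposes $G$ into $G_1=G(V_1)$ and $H=G(U)$ if $V(G)=V_1\cup U$, $V_1\cap U=\{v\}$, both induced subgraphs are connected, and no edge joins $V_1\setminus\{v\}$ to $U\setminus\{v\}$. A divisor is a function $V\to\mathbb{Z}$, $\deg(f)=\sum f(u)$; $\epsilon_v$ is the divisor with value $1$ at $v$ and $0$ elsewhere. Contraction: $f_{G/H}$ is the divisor on $G_1$ with $f_{G/H}(u)=f(u)$ for $u\in V_1\setminus\{v\}$, $f_{G/H}(v)=\sum_{u\in U}f(u)$. Zero: $f_{N(H)}$ is the divisor on $H$ with $f_{N(H)}(u)=f(u)$ for $u\in U\setminus\{v\}$ and $f_{N(H)}(v)=-\sum_{u\in U\setminus\{v\}}f(u)$ (so $\deg f_{N(H)}=0$). Laplacian $\Delta_X(u,u)=\deg(u)$, $\Delta_X(u,w)=-e(u,w)$ for $u\ne w$; $f\sim g$ on $X$ if $g=f+x\Delta_X$, $x$ integral. Effective: all values $\ge0$; L-effective: equivalent to an effective divisor. A degree-$0$ divisor on the cycle $H$ is good if it is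 L-effective on $H$, bad otherwise. The rank $\rho_X(f)$ on a graph $X$ is $-1$ if $f$ is not L-effective on $X$, otherwise the largest $r\ge0$ with $f-\lambda$ L-effective on $X$ for all effective $\lambda$ of degree $r$ on $X$. *)

theory Defs
  imports Main
begin

text \<open>A multigraph on vertex set V is given by an edge-multiplicity function
  e :: 'a => 'a => nat (e u w = number of edges between u and w).
  Subgraph notions are taken relative to a vertex set W (induced subgraph G(W)).\<close>

definition multigraph :: "'a set \<Rightarrow> ('a \<Rightarrow> 'a \<Rightarrow> nat) \<Rightarrow> bool" where
  "multigraph V e \<longleftrightarrow> finite V \<and> (\<forall>u w. e u w = e w u) \<and> (\<forall>u. e u u = 0)
     \<and> (\<forall>u w. e u w > 0 \<longrightarrow> u \<in> V \<and> w \<in> V)"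

definition adj_in :: "('a \<Rightarrow> 'a \<Rightarrow> nat) \<Rightarrow> 'a set \<Rightarrow> 'a \<Rightarrow> 'a \<Rightarrow> bool" where
  "adj_in e W u w \<longleftrightarrow> u \<in> W \<and> w \<in> W \<and> e u w > 0"

definition connected_in :: "('a \<Rightarrow> 'a \<Rightarrow> nat) \<Rightarrow> 'a set \<Rightarrow> bool" where
  "connected_in e W \<longleftrightarrow> W \<noteq> {} \<and> (\<forall>u\<in>W. \<forall>w\<in>W. (adj_in e W)\<^sup>*\<^sup>* u w)"

definition deg_in :: "('a \<Rightarrow> 'a \<Rightarrow> nat) \<Rightarrow> 'a set \<Rightarrow> 'a \<Rightarrow> nat" where
  "deg_in e W u = (\<Sum>w\<in>W - {u}. e u w)"

definition is_cycle :: "('a \<Rightarrow> 'a \<Rightarrow> nat) \<Rightarrow> 'a set \<Rightarrow> bool" where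
  "is_cycle e W \<longleftrightarrow> connected_in e W \<and> card W \<ge> 2 \<and> (\<forall>u\<in>W. deg_in e W u = 2)"

definition is_cut_vertex :: "('a \<Rightarrow> 'a \<Rightarrow> nat) \<Rightarrow> 'a set \<Rightarrow> 'a \<Rightarrow> bool" where
  "is_cut_vertex e V v \<longleftrightarrow> v \<in> V \<and> \<not> connected_in e (V - {v})"

definition decomposes :: "('a \<Rightarrow> 'a \<Rightarrow> nat) \<Rightarrow> 'a set \<Rightarrow> 'a \<Rightarrow> 'a set \<Rightarrow> 'a set \<Rightarrow> bool" where
  "decomposes e V v V1 U \<longleftrightarrow> V = V1 \<union> U \<and> V1 \<inter> U = {v}
     \<and> connected_in e V1 \<and> connected_in e U
     \<and> (\<forall>a\<in>V1 - {v}. \<forall>b\<in>U - {v}. e a b = 0)"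

type_synonym 'a divisor = "'a \<Rightarrow> int"

definition div_deg :: "'a set \<Rightarrow> 'a divisor \<Rightarrow> int" where
  "div_deg W f = (\<Sum>u\<in>W. f u)"

definition eps :: "'a \<Rightarrow> 'a divisor" where
  "eps v = (\<lambda>u. if u = v then 1 else 0)"

definition laplacian :: "('a \<Rightarrow> 'a \<Rightarrow> nat) \<Rightarrow> 'a set \<Rightarrow> 'a \<Rightarrow> 'a \<Rightarrow> int" where
  "laplacian e W u w = (if u = w then int (deg_in e W u) else - int (e u w))"

definition lin_equiv :: "('a \<Rightarrow> 'a \<Rightarrow> nat) \<Rightarrow> 'a set \<Rightarrow> 'a divisor \<Rightarrow> 'a divisor \<Rightarrow> bool" where
  "lin_equiv e W f g \<longleftrightarrow>
     (\<exists>x :: 'a \<Rightarrow> int. \<forall>w\<in>W. g w = f w + (\<Sum>u\<in>W. x u * laplacian e W u w))"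

definition effective :: "'a set \<Rightarrow> 'a divisor \<Rightarrow> bool" where
  "effective W f \<longleftrightarrow> (\<forall>u\<in>W. f u \<ge> 0)"

definition L_effective :: "('a \<Rightarrow> 'a \<Rightarrow> nat) \<Rightarrow> 'a set \<Rightarrow> 'a divisor \<Rightarrow> bool" where
  "L_effective e W f \<longleftrightarrow> (\<exists>g. lin_equiv e W f g \<and> effective W g)"

definition rank :: "('a \<Rightarrow> 'a \<Rightarrow> nat) \<Rightarrow> 'a set \<Rightarrow> 'a divisor \<Rightarrow> int" where
  "rank e W f = (if \<not> L_effective e W f then -1
     else int (GREATEST r::nat. \<forall>lam. effective W lam \<and> div_deg W lam = int r
                                   \<longrightarrow> L_effective e W (\<lambda>u. f u - lam u)))"

text \<open>Contraction f_{G/H} (a divisor on G_1) and zero f_{N(H)} (a divisor on H).\<close>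
definition contract_div :: "'a set \<Rightarrow> 'a \<Rightarrow> 'a divisor \<Rightarrow> 'a divisor" where
  "contract_div U v f = (\<lambda>u. if u = v then (\<Sum>w\<in>U. f w) else f u)"

definition zero_div :: "'a set \<Rightarrow> 'a \<Rightarrow> 'a divisor \<Rightarrow> 'a divisor" where
  "zero_div U v f = (\<lambda>u. if u = v then - (\<Sum>w\<in>U - {v}. f w) else f u)"

definition bad :: "('a \<Rightarrow> 'a \<Rightarrow> nat) \<Rightarrow> 'a set \<Rightarrow> 'a divisor \<Rightarrow> bool" where
  "bad e U f \<longleftrightarrow> \<not> L_effective e U f"

end

theory Submission
  imports Defs
begin

definition Lap :: "('a \<Rightarrow> 'a \<Rightarrow> nat) \<Rightarrow> 'a set \<Rightarrow> ('a \<Rightarrow> int) \<Rightarrow> 'a \<Rightarrow> int" where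
  "Lap e W x w = (\<Sum>u\<in>W. int (e u w) * (x w - x u))"

definition Leff :: "('a \<Rightarrow> 'a \<Rightarrow> nat) \<Rightarrow> 'a set \<Rightarrow> 'a divisor \<Rightarrow> bool" where
  "Leff e W f \<longleftrightarrow> (\<exists>x. \<forall>w\<in>W. 0 \<le> f w + Lap e W x w)"

lemma lap_sum:
  assumes "finite W" "\<forall>u. e u u = 0" "\<forall>u w. e u w = e w u" "w \<in> W"
  shows "(\<Sum>u\<in>W. x u * laplacian e W u w) = Lap e W x w"
proof -
  have "(\<Sum>u\<in>W. x u * laplacian e W u w) = x w * laplacian e W w w + (\<Sum>u\<in>W-{w}. x u * laplacian e W u w)"
    using assms by (simp add: sum.remove)
  also have "\<dots> = x w * (\<Sum>u\<in>W-{w}. int (e w u)) + (\<Sum>u\<in>W-{w}. - x u * int (e u w))"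
    by (simp add: laplacian_def deg_in_def)
  also have "\<dots> = (\<Sum>u\<in>W-{w}. int (e u w) * (x w - x u))"
    using assms(3) by (simp add: sum_distrib_left sum_subtractf[symmetric] algebra_simps sum.distrib[symmetric])
  also have "\<dots> = Lap e W x w"
    using assms by (simp add: Lap_def sum.remove)
  finally show ?thesis .
qed

lemma L_effective_Leff:
  assumes "finite W" "\<forall>u. e u u = 0" "\<forall>u w. e u w = e w u"
  shows "L_effective e W f = Leff e W f"
proof
  assume "L_effective e W f"
  then obtain g x where "\<forall>w\<in>W. g w = f w + (\<Sum>u\<in>W. x u * laplacian e W u w)" "effective W g"
    unfolding L_effective_def lin_equiv_def by blast
  then show "Leff e W f" unfolding Leff_def effective_def using lap_sum[OF assms]
    by (metis)
next
  assume "Leff e W f"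
  then obtain x where x: "\<forall>w\<in>W. 0 \<le> f w + Lap e W x w" unfolding Leff_def by blast
  show "L_effective e W f" unfolding L_effective_def lin_equiv_def effective_def
    apply (rule exI[of _ "\<lambda>w. f w + Lap e W x w"])
    using x lap_sum[OF assms] by auto
qed

lemma Leff_cong: "(\<And>w. w \<in> W \<Longrightarrow> f w = g w) \<Longrightarrow> Leff e W f = Leff e W g"
  unfolding Leff_def by auto

lemma Lap_shift: "Lap e W (\<lambda>u. x u + c) w = Lap e W x w"
  unfolding Lap_def by simp

lemma Lap_lin: "Lap e W (\<lambda>u. a * x u + b * y u) w = a * Lap e W x w + b * Lap e W y w"
  unfolding Lap_def by (simp add: sum_distrib_left sum.distrib[symmetric] algebra_simps)

lemma Lap_diff: "Lap e W (\<lambda>u. x u - y u) w = Lap e W x w - Lap e W y w"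
  unfolding Lap_def by (simp add: sum_subtractf[symmetric] algebra_simps)

lemma Lap_cong: "(\<And>u. u \<in> W \<Longrightarrow> x u = y u) \<Longrightarrow> w \<in> W \<Longrightarrow> Lap e W x w = Lap e W y w"
  unfolding Lap_def by simp

lemma Lap_sym:
  assumes "\<forall>u w. e u w = e w u"
  shows "(\<Sum>w\<in>W. a w * Lap e W b w) = (\<Sum>w\<in>W. b w * Lap e W a w)"
proof -
  have s: "(\<Sum>w\<in>W. \<Sum>u\<in>W. int (e u w) * a w * b u) = (\<Sum>w\<in>W. \<Sum>u\<in>W. int (e u w) * b w * a u)"
    apply (subst sum.swap) using assms by (simp add: algebra_simps)
  have "(\<Sum>w\<in>W. a w * Lap e W b w) = (\<Sum>w\<in>W. \<Sum>u\<in>W. int (e u w) * a w * b w) - (\<Sum>w\<in>W. \<Sum>u\<in>W. int (e u w) * a w * b u)"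
    unfolding Lap_def by (simp add: sum_distrib_left sum_subtractf[symmetric] algebra_simps)
  moreover have "(\<Sum>w\<in>W. b w * Lap e W a w) = (\<Sum>w\<in>W. \<Sum>u\<in>W. int (e u w) * a w * b w) - (\<Sum>w\<in>W. \<Sum>u\<in>W. int (e u w) * b w * a u)"
    unfolding Lap_def by (simp add: sum_distrib_left sum_subtractf[symmetric] algebra_simps)
  ultimately show ?thesis using s by simp
qed

lemma Lap_total:
  assumes "\<forall>u w. e u w = e w u"
  shows "(\<Sum>w\<in>W. Lap e W x w) = 0"
  using Lap_sym[OF assms, of "\<lambda>_. 1" W x] by (simp add: Lap_def)


lemma deg_int:
  assumes "finite U" "\<forall>u. e u u = 0" "\<forall>u w. e u w = e w u" "w \<in> U"
  shows "int (deg_in e U w) = (\<Sum>u\<in>U. int (e u w))"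
proof -
  have "(\<Sum>u\<in>U. int (e u w)) = int (e w w) + (\<Sum>u\<in>U-{w}. int (e u w))"
    using assms by (simp add: sum.remove)
  then show ?thesis using assms by (simp add: deg_in_def)
qed

lemma cut_lemma:
  assumes fin: "finite U" and lo: "\<forall>u. e u u = 0" and sy: "\<forall>u w. e u w = e w u"
    and deg2: "\<forall>u\<in>U. deg_in e U u = 2"
  shows "A \<subseteq> U \<Longrightarrow> (\<forall>B\<subseteq>A. B \<noteq> {} \<longrightarrow> \<not>(\<forall>u\<in>B. g u \<ge> (\<Sum>w\<in>U-B. int (e u w))))
     \<Longrightarrow> 2 * (\<Sum>u\<in>A. g u) \<le> (\<Sum>u\<in>A. \<Sum>w\<in>U-A. int (e u w))"
proof (induction "card A" arbitrary: A)
  case 0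
  then have "A = {}" using fin by (metis finite_subset card_0_eq)
  then show ?case by simp
next
  case (Suc n)
  have finA: "finite A" using Suc.prems fin finite_subset by blast
  have "A \<noteq> {}" using Suc.hyps by auto
  then obtain u where uA: "u \<in> A" and gu: "g u < (\<Sum>w\<in>U-A. int (e u w))"
    using Suc.prems(2) by (meson order_refl not_le)
  define A' where "A' = A - {u}"
  have cA': "n = card A'" using Suc.hyps uA finA by (simp add: A'_def)
  have IH: "2 * (\<Sum>u\<in>A'. g u) \<le> (\<Sum>u\<in>A'. \<Sum>w\<in>U-A'. int (e u w))"
    apply (rule Suc.hyps(1)[OF cA'])
    using Suc.prems unfolding A'_def by auto
  have uU: "u \<in> U" using uA Suc.prems by auto
  have finA': "finite A'" using finA A'_def by simp
  have UA': "U - A' = insert u (U - A)" using uU uA unfolding A'_def by auto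
  have s1: "(\<Sum>y\<in>A'. \<Sum>w\<in>U-A'. int (e y w)) = (\<Sum>y\<in>A'. \<Sum>w\<in>U-A. int (e y w)) + (\<Sum>y\<in>A'. int (e y u))"
    unfolding UA' using fin uA by (simp add: sum.distrib add.commute)
  have s2: "(\<Sum>y\<in>A. \<Sum>w\<in>U-A. int (e y w)) = (\<Sum>w\<in>U-A. int (e u w)) + (\<Sum>y\<in>A'. \<Sum>w\<in>U-A. int (e y w))"
    unfolding A'_def using finA uA by (simp add: sum.remove)
  have s3: "(\<Sum>y\<in>A. g y) = g u + (\<Sum>y\<in>A'. g y)"
    unfolding A'_def using finA uA by (simp add: sum.remove)
  have "U - {u} = (U - A) \<union> A'" using Suc.prems(1) uA unfolding A'_def by auto
  then have "int (deg_in e U u) = (\<Sum>w\<in>U-A. int (e u w)) + (\<Sum>w\<in>A'. int (e u w))"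
    unfolding deg_in_def using fin finA' by (simp add: sum.union_disjoint A'_def) (subst sum.union_disjoint, auto)
  then have d: "(\<Sum>w\<in>U-A. int (e u w)) + (\<Sum>w\<in>A'. int (e w u)) = 2"
    using deg2 uU sy by simp
  show ?case using IH s1 s2 s3 d gu by linarith
qed


definition Inv :: "('a \<Rightarrow> 'a \<Rightarrow> nat) \<Rightarrow> 'a set \<Rightarrow> 'a \<Rightarrow> 'a set \<Rightarrow> ('a \<Rightarrow> int) \<Rightarrow> int \<Rightarrow> bool" where
  "Inv e U q R p c \<longleftrightarrow> q \<in> R \<and> R \<subseteq> U \<and> (\<forall>u. p u \<ge> 0) \<and> p q = 0 \<and> (\<forall>u\<in>R. p u < c)
     \<and> (\<forall>u\<in>U-R. p u = c) \<and> (\<forall>u\<in>R-{q}. Lap e U p u \<ge> 1)"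

lemma reach_out:
  assumes "(adj_in e U)\<^sup>*\<^sup>* q z" "q \<in> R"
  shows "z \<in> R \<or> (\<exists>y\<in>R. \<exists>w\<in>U-R. e y w > 0)"
  using assms
proof (induction rule: rtranclp_induct)
  case base then show ?case by simp
next
  case (step a b)
  then show ?case unfolding adj_in_def by blast
qed

lemma Lap_ind_lb:
  assumes "finite U" "\<forall>u. e u u = 0" "\<forall>u w. e u w = e w u" "\<forall>u\<in>U. deg_in e U u = 2"
    "w \<in> U" "w \<notin> B"
  shows "Lap e U (\<lambda>u. if u \<in> B then 1 else 0) w \<ge> -2"
proof -
  have "Lap e U (\<lambda>u. if u \<in> B then 1 else 0) w \<ge> (\<Sum>u\<in>U. - int (e u w))"
    unfolding Lap_def using assms(6) by (intro sum_mono) auto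
  moreover have "(\<Sum>u\<in>U. - int (e u w)) = -2"
    using deg_int[OF assms(1-3,5)] assms(4,5) by (simp add: sum_negf)
  ultimately show ?thesis by simp
qed

lemma grow:
  assumes fin: "finite U" and lo: "\<forall>u. e u u = 0" and sy: "\<forall>u w. e u w = e w u"
    and deg2: "\<forall>u\<in>U. deg_in e U u = 2" and conn: "connected_in e U"
    and I: "Inv e U q R p c" and ne: "R \<noteq> U"
  shows "\<exists>w p' c'. w \<in> U - R \<and> Inv e U q (insert w R) p' c'"
proof -
  from I have qR: "q \<in> R" and RU: "R \<subseteq> U" unfolding Inv_def by auto
  obtain z where z: "z \<in> U - R" using ne RU by blast
  have "(adj_in e U)\<^sup>*\<^sup>* q z" using conn qR RU z unfolding connected_in_def by blast
  then obtain y w where y: "y \<in> R" and w: "w \<in> U - R" and eyw: "e y w > 0"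
    using reach_out[OF _ qR] z by blast
  define R' where "R' = insert w R"
  define B where "B = U - R'"
  define p' where "p' = (\<lambda>u. 3 * p u + 1 * (if u \<in> B then 1 else 0))"
  have Lp': "Lap e U p' u = 3 * Lap e U p u + 1 * Lap e U (\<lambda>u. if u \<in> B then 1 else 0) u" for u
    unfolding p'_def by (rule Lap_lin)
  have lb: "u \<in> R' \<Longrightarrow> Lap e U (\<lambda>u. if u \<in> B then 1 else 0) u \<ge> -2" for u
  proof -
    assume "u \<in> R'"
    then have "u \<in> U" "u \<notin> B" using RU w unfolding R'_def B_def by auto
    then show ?thesis using Lap_ind_lb[OF fin lo sy deg2] by blast
  qed
  have Lw: "Lap e U p w \<ge> 1"
  proof -
    have terms: "\<forall>u\<in>U. int (e u w) * (p w - p u) \<ge> 0"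
    proof
      fix u assume u: "u \<in> U"
      have "p w - p u \<ge> 0"
      proof (cases "u \<in> R")
        case True then show ?thesis using I w unfolding Inv_def by force
      next
        case False then show ?thesis using I w u unfolding Inv_def by force
      qed
      then show "int (e u w) * (p w - p u) \<ge> 0" by simp
    qed
    have "int (e y w) * (p w - p y) \<le> Lap e U p w"
      unfolding Lap_def using terms y RU fin by (intro member_le_sum) auto
    moreover have "p w - p y \<ge> 1" using I w y unfolding Inv_def by auto
    moreover have "int (e y w) \<ge> 1" using eyw by simp
    ultimately have "int (e y w) * (p w - p y) \<ge> 1 * 1"
      by (intro mult_mono) auto
    then show ?thesis using \<open>int (e y w) * (p w - p y) \<le> Lap e U p w\<close> by linarith
  qed
  have "Inv e U q R' p' (3 * c + 1)"
    unfolding Inv_def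
  proof (intro conjI)
    show "q \<in> R'" "R' \<subseteq> U" using qR RU w unfolding R'_def by auto
    show "\<forall>u. 0 \<le> p' u" using I unfolding Inv_def p'_def by auto
    show "p' q = 0" using I qR unfolding Inv_def p'_def B_def R'_def by auto
    show "\<forall>u\<in>R'. p' u < 3 * c + 1" using I w unfolding Inv_def p'_def B_def R'_def by force
    show "\<forall>u\<in>U - R'. p' u = 3 * c + 1" using I unfolding Inv_def p'_def B_def R'_def by auto
    show "\<forall>u\<in>R' - {q}. 1 \<le> Lap e U p' u"
    proof
      fix u assume u: "u \<in> R' - {q}"
      have "Lap e U p u \<ge> 1"
      proof (cases "u = w")
        case True then show ?thesis using Lw by simp
      next
        case False then show ?thesis using I u unfolding Inv_def R'_def by auto
      qed
      then show "1 \<le> Lap e U p' u" using Lp'[of u] lb[of u] u by simp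
    qed
  qed
  then show ?thesis using w R'_def by blast
qed

lemma potential:
  assumes fin: "finite U" and lo: "\<forall>u. e u u = 0" and sy: "\<forall>u w. e u w = e w u"
    and deg2: "\<forall>u\<in>U. deg_in e U u = 2" and conn: "connected_in e U" and q: "q \<in> U"
  shows "\<exists>p. (\<forall>u. p u \<ge> 0) \<and> p q = 0 \<and> (\<forall>u\<in>U-{q}. Lap e U p u \<ge> 1)"
proof -
  have base: "Inv e U q {q} (\<lambda>u. if u = q then 0 else 1) 1" unfolding Inv_def using q by auto
  have main: "n < card U \<Longrightarrow> (\<exists>R p c. card R = Suc n \<and> Inv e U q R p c)" for n
  proof (induction n)
    case 0
    show ?case
      apply (rule exI[of _ "{q}"], rule exI[of _ "\<lambda>u. if u = q then 0 else 1"], rule exI[of _ 1])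
      using base by simp
  next
    case (Suc n)
    then have lt: "Suc n < card U" by simp
    then obtain R p c where R: "card R = Suc n" "Inv e U q R p c" using Suc.IH by force
    have "R \<noteq> U" using R lt by auto
    then obtain w p' c' where w: "w \<in> U - R" and I': "Inv e U q (insert w R) p' c'"
      using grow[OF fin lo sy deg2 conn R(2)] by blast
    have "finite R" using R(2) fin unfolding Inv_def using finite_subset by blast
    then have "card (insert w R) = Suc (Suc n)" using R(1) w by simp
    then show ?case using I' by blast
  qed
  have cU: "card U > 0" using q fin card_gt_0_iff by blast
  obtain R p c where R: "card R = Suc (card U - 1)" "Inv e U q R p c"
    using main[of "card U - 1"] cU by auto
  have RU: "R \<subseteq> U" using R(2) unfolding Inv_def by blast
  have "card R = card U" using R(1) cU by simp
  then have "R = U" using RU fin card_subset_eq by blast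
  then show ?thesis using R(2) unfolding Inv_def by auto
qed


lemma Lap_scale: "Lap e W (\<lambda>u. a * x u) w = a * Lap e W x w"
  unfolding Lap_def by (simp add: sum_distrib_left algebra_simps)

lemma deg1_Leff:
  assumes fin: "finite U" and lo: "\<forall>u. e u u = 0" and sy: "\<forall>u w. e u w = e w u"
    and deg2: "\<forall>u\<in>U. deg_in e U u = 2" and conn: "connected_in e U"
    and K1: "(\<Sum>u\<in>U. K u) = 1"
  shows "Leff e U K"
proof -
  obtain q where q: "q \<in> U" using conn unfolding connected_in_def by blast
  obtain p where p0: "\<forall>u. p u \<ge> 0" and pq: "p q = 0" and pL: "\<forall>u\<in>U-{q}. Lap e U p u \<ge> 1"
    using potential[OF fin lo sy deg2 conn q] by blast
  define N where "N = (\<Sum>u\<in>U. \<bar>K u\<bar>)"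
  define P where "P g \<longleftrightarrow> (\<exists>x. \<forall>w\<in>U. g w = K w + Lap e U x w) \<and> (\<forall>w\<in>U-{q}. g w \<ge> 0)" for g
  define \<Phi> where "\<Phi> g = nat (\<Sum>u\<in>U. g u * p u)" for g :: "'a \<Rightarrow> int"
  have "P (\<lambda>w. K w + Lap e U (\<lambda>u. N * p u) w)"
    unfolding P_def
  proof (intro conjI)
    show "\<exists>x. \<forall>w\<in>U. K w + Lap e U (\<lambda>u. N * p u) w = K w + Lap e U x w" by blast
    show "\<forall>w\<in>U - {q}. 0 \<le> K w + Lap e U (\<lambda>u. N * p u) w"
    proof
      fix w assume w: "w \<in> U - {q}"
      have "\<bar>K w\<bar> \<le> N" unfolding N_def using fin w by (intro member_le_sum) auto
      moreover have "N \<ge> 0" unfolding N_def by (simp add: sum_nonneg)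
      moreover have "N * Lap e U p w \<ge> N" using pL w \<open>N \<ge> 0\<close>
        by (metis mult.right_neutral mult_left_mono)
      ultimately show "0 \<le> K w + Lap e U (\<lambda>u. N * p u) w" unfolding Lap_scale by linarith
    qed
  qed
  then obtain g where Pg: "P g" and gmin: "\<forall>h. P h \<longrightarrow> \<Phi> g \<le> \<Phi> h"
    using ex_has_least_nat[of P _ \<Phi>] by blast
  obtain x where gx: "\<forall>w\<in>U. g w = K w + Lap e U x w" using Pg unfolding P_def by blast
  have gnn: "\<forall>w\<in>U-{q}. g w \<ge> 0" using Pg unfolding P_def by blast
  have gsum: "(\<Sum>u\<in>U. g u) = 1"
    using gx K1 Lap_total[OF sy, of U x] by (simp add: sum.distrib)
  have gq: "g q \<ge> 0"
  proof (rule ccontr)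
    assume neg: "\<not> g q \<ge> 0"
    have "(\<Sum>u\<in>U. g u) = g q + (\<Sum>u\<in>U-{q}. g u)" using fin q by (simp add: sum.remove)
    then have big: "(\<Sum>u\<in>U-{q}. g u) \<ge> 2" using neg gsum by linarith
    have sig: "(\<Sum>u\<in>U-{q}. \<Sum>w\<in>U-(U-{q}). int (e u w)) = 2"
    proof -
      have "U - (U - {q}) = {q}" using q by auto
      then have "(\<Sum>u\<in>U-{q}. \<Sum>w\<in>U-(U-{q}). int (e u w)) = (\<Sum>u\<in>U-{q}. int (e u q))" by simp
      also have "\<dots> = int (deg_in e U q)" unfolding deg_in_def using sy by simp
      finally show ?thesis using deg2 q by simp
    qed
    have "\<not> (\<forall>B\<subseteq>U-{q}. B \<noteq> {} \<longrightarrow> \<not>(\<forall>u\<in>B. g u \<ge> (\<Sum>w\<in>U-B. int (e u w))))"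
    proof
      assume "\<forall>B\<subseteq>U-{q}. B \<noteq> {} \<longrightarrow> \<not>(\<forall>u\<in>B. g u \<ge> (\<Sum>w\<in>U-B. int (e u w)))"
      from cut_lemma[OF fin lo sy deg2 _ this] have "2 * (\<Sum>u\<in>U-{q}. g u) \<le> 2" using sig by simp
      then show False using big by simp
    qed
    then obtain B where BU: "B \<subseteq> U - {q}" and Bne: "B \<noteq> {}" and legal: "\<forall>u\<in>B. g u \<ge> (\<Sum>w\<in>U-B. int (e u w))"
      by blast
    define ind where "ind u = (if u \<in> B then 1 else (0::int))" for u
    define g' where "g' w = g w - Lap e U ind w" for w
    have "P g'"
      unfolding P_def
    proof (intro conjI)
      show "\<exists>x. \<forall>w\<in>U. g' w = K w + Lap e U x w"
        by (rule exI[of _ "\<lambda>u. x u - ind u"]) (simp add: g'_def gx Lap_diff)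
      show "\<forall>w\<in>U - {q}. 0 \<le> g' w"
      proof
        fix w assume w: "w \<in> U - {q}"
        show "0 \<le> g' w"
        proof (cases "w \<in> B")
          case True
          have "Lap e U ind w = (\<Sum>u\<in>U. int (e u w) * (1 - ind u))" unfolding Lap_def ind_def using True by simp
          also have "\<dots> = (\<Sum>u\<in>U-B. int (e u w))"
          proof -
            have "(\<Sum>u\<in>U. int (e u w) * (1 - ind u)) = (\<Sum>u\<in>U. if u \<in> U - B then int (e u w) else 0)"
              by (rule sum.cong) (auto simp: ind_def)
            also have "\<dots> = (\<Sum>u\<in>U-B. int (e u w))" using fin by (simp add: sum.If_cases Int_absorb1 Diff_eq Compl_eq)
            finally show ?thesis .
          qed
          also have "\<dots> = (\<Sum>u\<in>U-B. int (e w u))" using sy by simp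
          finally show ?thesis using legal True unfolding g'_def by simp
        next
          case False
          have "Lap e U ind w = (\<Sum>u\<in>U. int (e u w) * (- ind u))" unfolding Lap_def ind_def using False by simp
          also have "\<dots> \<le> 0" by (intro sum_nonpos) (simp add: ind_def)
          moreover have "g w \<ge> 0" using gnn w by blast
          ultimately show ?thesis unfolding g'_def by linarith
        qed
      qed
    qed
    then have "\<Phi> g \<le> \<Phi> g'" using gmin by blast
    moreover have "(\<Sum>u\<in>U. g' u * p u) = (\<Sum>u\<in>U. g u * p u) - (\<Sum>u\<in>U. p u * Lap e U ind u)"
      unfolding g'_def by (simp add: algebra_simps sum_subtractf)
    moreover have "(\<Sum>u\<in>U. p u * Lap e U ind u) = (\<Sum>u\<in>U. ind u * Lap e U p u)"
      by (rule Lap_sym[OF sy])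
    moreover have "(\<Sum>u\<in>U. ind u * Lap e U p u) = (\<Sum>u\<in>B. Lap e U p u)"
    proof -
      have "(\<Sum>u\<in>U. ind u * Lap e U p u) = (\<Sum>u\<in>U. if u \<in> B then Lap e U p u else 0)"
        by (rule sum.cong) (auto simp: ind_def)
      also have "\<dots> = (\<Sum>u\<in>B. Lap e U p u)" using fin BU by (simp add: sum.If_cases Int_absorb1 Int_absorb2 Diff_subset subset_trans)
      finally show ?thesis .
    qed
    moreover have "(\<Sum>u\<in>B. Lap e U p u) \<ge> 1"
    proof -
      obtain b where b: "b \<in> B" using Bne by blast
      have finB: "finite B" using BU fin finite_subset by blast
      have "(\<Sum>u\<in>B. Lap e U p u) \<ge> (\<Sum>u\<in>B. 1)" using pL BU by (intro sum_mono) auto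
      moreover have "(\<Sum>u\<in>B. (1::int)) \<ge> 1" using finB b by (simp add: Suc_le_eq card_gt_0_iff) blast
      ultimately show ?thesis by linarith
    qed
    moreover have "(\<Sum>u\<in>U. g' u * p u) \<ge> 0"
    proof -
      have "\<forall>u\<in>U. g' u * p u \<ge> 0"
      proof
        fix u assume u: "u \<in> U"
        show "g' u * p u \<ge> 0"
        proof (cases "u = q")
          case True then show ?thesis using pq by simp
        next
          case False then show ?thesis using \<open>P g'\<close> u p0 unfolding P_def by simp
        qed
      qed
      then show ?thesis by (simp add: sum_nonneg)
    qed
    ultimately show False unfolding \<Phi>_def by linarith
  qed
  have "\<forall>w\<in>U. 0 \<le> K w + Lap e U x w" using gx gnn gq by (metis Diff_iff empty_iff insert_iff)
  then show ?thesis unfolding Leff_def by blast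
qed


locale setting =
  fixes e :: "'a \<Rightarrow> 'a \<Rightarrow> nat" and V V1 U :: "'a set" and v :: 'a
  assumes finV: "finite V" and lo: "\<forall>u. e u u = 0" and sy: "\<forall>u w. e u w = e w u"
    and VV: "V = V1 \<union> U" and VI: "V1 \<inter> U = {v}"
    and sep: "\<forall>a\<in>V1 - {v}. \<forall>b\<in>U - {v}. e a b = 0"
begin

lemma finV1: "finite V1" using finV VV by simp
lemma finU: "finite U" using finV VV by simp
lemma vV1: "v \<in> V1" using VI by auto
lemma vU: "v \<in> U" using VI by auto

lemma split_sum: "(\<Sum>u\<in>V. t u) = (\<Sum>u\<in>V1. t u) + (\<Sum>u\<in>U-{v}. t u)"
proof -
  have "V = V1 \<union> (U - {v})" using VV VI by auto
  moreover have "V1 \<inter> (U - {v}) = {}" using VI by auto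
  ultimately show ?thesis using finV1 finU by (simp add: sum.union_disjoint)
qed

lemma decomp1: "w \<in> V1 - {v} \<Longrightarrow> Lap e V x w = Lap e V1 x w"
proof -
  assume w: "w \<in> V1 - {v}"
  have "\<forall>u\<in>U-{v}. e u w = 0" using sep w sy by metis
  then have "(\<Sum>u\<in>U-{v}. int (e u w) * (x w - x u)) = 0"
    by (intro sum.neutral) auto
  then show ?thesis unfolding Lap_def by (simp add: split_sum)
qed

lemma decomp2: "w \<in> U - {v} \<Longrightarrow> Lap e V x w = Lap e U x w"
proof -
  assume w: "w \<in> U - {v}"
  have z: "(\<Sum>u\<in>V1-{v}. int (e u w) * (x w - x u)) = 0"
    using sep w by (intro sum.neutral) auto
  have "(\<Sum>u\<in>V1. int (e u w) * (x w - x u)) = int (e v w) * (x w - x v) + (\<Sum>u\<in>V1-{v}. int (e u w) * (x w - x u))"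
    using finV1 vV1 by (simp add: sum.remove)
  moreover have "(\<Sum>u\<in>U. int (e u w) * (x w - x u)) = int (e v w) * (x w - x v) + (\<Sum>u\<in>U-{v}. int (e u w) * (x w - x u))"
    using finU vU by (simp add: sum.remove)
  ultimately show ?thesis unfolding Lap_def using z by (simp add: split_sum)
qed

lemma decomp3: "Lap e V x v = Lap e V1 x v + Lap e U x v"
proof -
  have "(\<Sum>u\<in>U. int (e u v) * (x v - x u)) = int (e v v) * (x v - x v) + (\<Sum>u\<in>U-{v}. int (e u v) * (x v - x u))"
    using finU vU by (simp add: sum.remove)
  then show ?thesis unfolding Lap_def using lo by (simp add: split_sum)
qed

lemma sumU: "(\<Sum>u\<in>U. t u) = t v + (\<Sum>u\<in>U-{v}. t u)"
  using finU vU by (simp add: sum.remove)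

lemma a_dir:
  assumes bad: "\<not> Leff e U (zero_div U v E)" and L: "Leff e V E"
  shows "Leff e V1 (\<lambda>u. contract_div U v E u - eps v u)"
proof -
  obtain x where x: "\<forall>w\<in>V. 0 \<le> E w + Lap e V x w" using L unfolding Leff_def by blast
  define F where "F w = E w + Lap e V x w" for w
  have F0: "\<forall>w\<in>V. F w \<ge> 0" using x F_def by simp
  have tot: "(\<Sum>w\<in>U. Lap e U x w) = 0" by (rule Lap_total[OF sy])
  have LUv: "Lap e U x v = - (\<Sum>w\<in>U-{v}. Lap e U x w)" using tot sumU[of "Lap e U x"] by simp
  have eqU: "(\<Sum>w\<in>U-{v}. Lap e U x w) = (\<Sum>w\<in>U-{v}. F w - E w)"
    by (rule sum.cong) (auto simp: F_def decomp2)
  have FU: "(\<Sum>w\<in>U-{v}. F w) \<ge> 0" using F0 VV by (intro sum_nonneg) auto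
  have Fv: "F v \<ge> 0" using F0 VV vU by auto
  have key: "(\<Sum>w\<in>U-{v}. F w) + F v \<ge> 1"
  proof (rule ccontr)
    assume "\<not> ?thesis"
    then have S0: "(\<Sum>w\<in>U-{v}. F w) \<le> 0" using Fv by linarith
    have "Leff e U (zero_div U v E)" unfolding Leff_def
    proof (intro exI ballI)
      fix w assume w: "w \<in> U"
      show "0 \<le> zero_div U v E w + Lap e U x w"
      proof (cases "w = v")
        case True
        have "zero_div U v E w + Lap e U x w = - (\<Sum>w\<in>U-{v}. F w)"
          using True LUv eqU by (simp add: zero_div_def sum_subtractf)
        then show ?thesis using S0 by simp
      next
        case False
        have "w \<in> V" using VV w by auto
        then have "F w \<ge> 0" using F0 by blast
        then show ?thesis using False w decomp2[of w x] unfolding zero_div_def F_def by auto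
      qed
    qed
    then show False using bad by simp
  qed
  show ?thesis unfolding Leff_def
  proof (intro exI ballI)
    fix w assume w: "w \<in> V1"
    show "0 \<le> contract_div U v E w - eps v w + Lap e V1 x w"
    proof (cases "w = v")
      case True
      have "contract_div U v E w - eps v w + Lap e V1 x w
          = (E v + (\<Sum>u\<in>U-{v}. E u)) - 1 + (F v - E v) - Lap e U x v"
        using True decomp3[of x] sumU[of E] by (simp add: contract_div_def eps_def F_def)
      also have "\<dots> = (\<Sum>w\<in>U-{v}. F w) + F v - 1"
        using LUv eqU by (simp add: sum_subtractf)
      finally show ?thesis using key by simp
    next
      case False
      have "w \<in> V" using VV w by auto
      then have "0 \<le> E w + Lap e V x w" using x by blast
      then show ?thesis using False w decomp1[of w x] by (auto simp: contract_div_def eps_def)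
    qed
  qed
qed

lemma b_dir:
  assumes C1: "\<And>K. (\<Sum>u\<in>U. K u) = 1 \<Longrightarrow> Leff e U K"
    and L: "Leff e V1 (\<lambda>u. contract_div U v E u - eps v u)"
  shows "Leff e V E"
proof -
  obtain y where y: "\<forall>w\<in>V1. 0 \<le> contract_div U v E w - eps v w + Lap e V1 y w"
    using L unfolding Leff_def by blast
  define K where "K w = (if w = v then 1 - (\<Sum>u\<in>U-{v}. E u) else E w)" for w
  have "(\<Sum>u\<in>U. K u) = 1"
  proof -
    have "(\<Sum>u\<in>U-{v}. K u) = (\<Sum>u\<in>U-{v}. E u)" by (rule sum.cong) (auto simp: K_def)
    then show ?thesis using sumU[of K] by (simp add: K_def)
  qed
  then obtain z where z: "\<forall>w\<in>U. 0 \<le> K w + Lap e U z w" using C1 unfolding Leff_def by blast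
  define x where "x u = (if u \<in> U - {v} then z u + (y v - z v) else y u)" for u
  have x1: "w \<in> V1 \<Longrightarrow> Lap e V1 x w = Lap e V1 y w" for w
    by (rule Lap_cong) (use VI in \<open>auto simp: x_def\<close>)
  have x2: "w \<in> U \<Longrightarrow> Lap e U x w = Lap e U z w" for w
  proof -
    assume w: "w \<in> U"
    have "Lap e U x w = Lap e U (\<lambda>u. z u + (y v - z v)) w"
      by (rule Lap_cong) (use w in \<open>auto simp: x_def\<close>)
    then show ?thesis by (simp add: Lap_shift)
  qed
  show ?thesis unfolding Leff_def
  proof (intro exI ballI)
    fix w assume w: "w \<in> V"
    consider "w = v" | "w \<in> V1 - {v}" | "w \<in> U - {v}" using w VV by blast
    then show "0 \<le> E w + Lap e V x w"
    proof cases
      case 1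
      have a: "0 \<le> contract_div U v E v - eps v v + Lap e V1 y v" using y vV1 by blast
      have b: "0 \<le> K v + Lap e U z v" using z vU by blast
      have "E w + Lap e V x w = (contract_div U v E v - eps v v + Lap e V1 y v) + (K v + Lap e U z v)"
        using 1 decomp3[of x] x1[OF vV1] x2[OF vU] sumU[of E]
        by (simp add: contract_div_def eps_def K_def)
      then show ?thesis using a b by linarith
    next
      case 2
      then show ?thesis using y decomp1[of w x] x1[of w] by (auto simp: contract_div_def eps_def)
    next
      case 3
      then show ?thesis using z decomp2[of w x] x2[of w] by (auto simp: K_def)
    qed
  qed
qed

end


theorem mainTheorem4:
  fixes V V1 U :: "'a set" and e :: "'a \<Rightarrow> 'a \<Rightarrow> nat" and v :: 'a and f :: "'a divisor"
  assumes "multigraph V e" and "connected_in e V"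
    and "is_cut_vertex e V v"
    and "decomposes e V v V1 U"
    and "is_cycle e U"
    and "bad e U (zero_div U v f)"
  shows "rank e V f = rank e V1 (\<lambda>u. contract_div U v f u - eps v u)"
proof -
  have finV: "finite V" and lo: "\<forall>u. e u u = 0" and sy: "\<forall>u w. e u w = e w u"
    using assms(1) unfolding multigraph_def by auto
  have VV: "V = V1 \<union> U" and VI: "V1 \<inter> U = {v}" and sep: "\<forall>a\<in>V1 - {v}. \<forall>b\<in>U - {v}. e a b = 0"
    using assms(4) unfolding decomposes_def by auto
  have connU: "connected_in e U" and deg2: "\<forall>u\<in>U. deg_in e U u = 2"
    using assms(5) unfolding is_cycle_def by auto
  interpret S: setting e V V1 U v using finV lo sy VV VI sep by unfold_locales
  have finU: "finite U" and finV1: "finite V1" using S.finU S.finV1 .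
  have LV: "L_effective e V g = Leff e V g" for g using L_effective_Leff[OF finV lo sy] .
  have LV1: "L_effective e V1 g = Leff e V1 g" for g using L_effective_Leff[OF finV1 lo sy] .
  have LU: "L_effective e U g = Leff e U g" for g using L_effective_Leff[OF finU lo sy] .
  have C1: "\<And>K. (\<Sum>u\<in>U. K u) = 1 \<Longrightarrow> Leff e U K"
    using deg1_Leff[OF finU lo sy deg2 connU] by blast
  have badf: "\<not> Leff e U (zero_div U v f)" using assms(6) LU unfolding bad_def by simp
  define D where "D u = contract_div U v f u - eps v u" for u
  have eq0: "Leff e V f \<longleftrightarrow> Leff e V1 D"
    using S.a_dir[OF badf] S.b_dir[OF C1] unfolding D_def by blast
  have eqP: "(\<forall>lam. effective V lam \<and> div_deg V lam = int r \<longrightarrow> Leff e V (\<lambda>u. f u - lam u))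
      \<longleftrightarrow> (\<forall>lam. effective V1 lam \<and> div_deg V1 lam = int r \<longrightarrow> Leff e V1 (\<lambda>u. D u - lam u))" for r
  proof
    assume PV: "\<forall>lam. effective V lam \<and> div_deg V lam = int r \<longrightarrow> Leff e V (\<lambda>u. f u - lam u)"
    show "\<forall>lam. effective V1 lam \<and> div_deg V1 lam = int r \<longrightarrow> Leff e V1 (\<lambda>u. D u - lam u)"
    proof (intro allI impI)
      fix lam assume lam: "effective V1 lam \<and> div_deg V1 lam = int r"
      define l where "l u = (if u \<in> V1 then lam u else 0)" for u
      have "effective V l" using lam unfolding effective_def l_def by auto
      moreover have "div_deg V l = int r"
      proof -
        have "(\<Sum>u\<in>U-{v}. l u) = 0" using VI unfolding l_def by (intro sum.neutral) auto
        moreover have "(\<Sum>u\<in>V1. l u) = (\<Sum>u\<in>V1. lam u)" unfolding l_def by simp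
        ultimately show ?thesis using lam S.split_sum[of l] unfolding div_deg_def by simp
      qed
      ultimately have L: "Leff e V (\<lambda>u. f u - l u)" using PV by blast
      have lU: "(\<Sum>u\<in>U-{v}. l u) = 0" using VI unfolding l_def by (intro sum.neutral) auto
      have "Leff e U (zero_div U v (\<lambda>u. f u - l u)) = Leff e U (zero_div U v f)"
      proof (rule Leff_cong)
        fix w assume w: "w \<in> U"
        show "zero_div U v (\<lambda>u. f u - l u) w = zero_div U v f w"
          using w VI lU unfolding zero_div_def by (auto simp: sum_subtractf l_def)
      qed
      then have "Leff e V1 (\<lambda>u. contract_div U v (\<lambda>u. f u - l u) u - eps v u)"
        using S.a_dir[OF _ L] badf by simp
      moreover have "Leff e V1 (\<lambda>u. contract_div U v (\<lambda>u. f u - l u) u - eps v u) = Leff e V1 (\<lambda>u. D u - lam u)"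
      proof (rule Leff_cong)
        fix w assume w: "w \<in> V1"
        have "(\<Sum>u\<in>U. l u) = lam v" using S.sumU[of l] lU S.vV1 unfolding l_def by simp
        then show "contract_div U v (\<lambda>u. f u - l u) w - eps v w = D w - lam w"
          using w unfolding D_def contract_div_def eps_def by (auto simp: sum_subtractf l_def)
      qed
      ultimately show "Leff e V1 (\<lambda>u. D u - lam u)" by simp
    qed
  next
    assume PV1: "\<forall>lam. effective V1 lam \<and> div_deg V1 lam = int r \<longrightarrow> Leff e V1 (\<lambda>u. D u - lam u)"
    show "\<forall>lam. effective V lam \<and> div_deg V lam = int r \<longrightarrow> Leff e V (\<lambda>u. f u - lam u)"
    proof (intro allI impI)
      fix lam assume lam: "effective V lam \<and> div_deg V lam = int r"
      define m where "m = contract_div U v lam"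
      have "effective V1 m"
        unfolding effective_def m_def contract_div_def
      proof
        fix u assume u: "u \<in> V1"
        have "(\<Sum>w\<in>U. lam w) \<ge> 0" using lam VV unfolding effective_def by (intro sum_nonneg) auto
        then show "0 \<le> (if u = v then \<Sum>w\<in>U. lam w else lam u)" using lam u VV unfolding effective_def by auto
      qed
      moreover have "div_deg V1 m = int r"
      proof -
        have "(\<Sum>u\<in>V1. m u) = m v + (\<Sum>u\<in>V1-{v}. m u)" using finV1 S.vV1 by (simp add: sum.remove)
        moreover have "(\<Sum>u\<in>V1-{v}. m u) = (\<Sum>u\<in>V1-{v}. lam u)" unfolding m_def contract_div_def by simp
        moreover have "(\<Sum>u\<in>V1. lam u) = lam v + (\<Sum>u\<in>V1-{v}. lam u)" using finV1 S.vV1 by (simp add: sum.remove)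
        ultimately show ?thesis using lam S.split_sum[of lam] S.sumU[of lam] unfolding div_deg_def m_def contract_div_def by simp
      qed
      ultimately have L: "Leff e V1 (\<lambda>u. D u - m u)" using PV1 by blast
      have "Leff e V1 (\<lambda>u. D u - m u) = Leff e V1 (\<lambda>u. contract_div U v (\<lambda>u. f u - lam u) u - eps v u)"
      proof (rule Leff_cong)
        fix w assume w: "w \<in> V1"
        show "D w - m w = contract_div U v (\<lambda>u. f u - lam u) w - eps v w"
          unfolding D_def m_def contract_div_def eps_def by (auto simp: sum_subtractf)
      qed
      then show "Leff e V (\<lambda>u. f u - lam u)" using S.b_dir[OF C1] L by simp
    qed
  qed
  show ?thesis
    unfolding rank_def LV LV1 D_def[symmetric] eq0 eqP ..
qed

end
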